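(* The map $\mu$ defined in the context is a probability kernel from $\mathsf{X}$ to $\mathsf{X}$; that is, $\mu(\cdot,B)$ is Borel measurable on $\mathsf{X}$ for every Borel $B\subseteq\mathsf{X}$, and $\mu(\mathsf{x},\cdot)$ is a probability measure on the Borel sets of $\mathsf{X}$ for every $\mathsf{x}\in\mathsf{X}$.
   Context: Fix $\theta_a,\theta_d>0$, positive integers $n,N$, $E=\mathbb{R}^N$, and a Borel probability measure $\eta$ on $E$ with finite mean. For a positive integer $k$, $[k]=\{0,\dots,k-1\}$. Elements of $\{0,1\}^{[n]}$ and $E^{[n+1]}$ are functions; $|\psi|=\sum_{i\in[n]}\psi(i)$. The state space is $\mathsf{X}=\{(\psi,\mathbf{v})\in\{0,1\}^{[n]}\times E^{[n+1]}:\sum_{i\in[n]}\psi(i)(\mathbf{v}(i)-\mathbf{v}(n))=0\}$ with the subspace topology of the product topology (discrete on $\{0,1\}$, Euclidean on $E$). For $i\in[n]$: $r_i(\psi)=\frac{\theta_d\psi(i)+\theta_a(1-\psi(i))}{\theta_d|\psi|+\theta_a(n-|\psi|)}$, and $s_i(\psi)$ agrees with $\psi$ except $s_i(\psi)(i)=1-\psi(i)$. For $\mathsf{x}=(\psi,\mathbf{v})\in\mathsf{X}$ and $i\in[n]$, let $\lambda_i^{\mathsf{x}}$ be the Borel measure on $\{0,1\}^{[n]}\times E^{[n+1]}$ given as the law of $(s_i(\psi),\mathbf{w})$, where $\mathbf{w}(j)=\mathbf{v}(j)$ for $j\in[n]\setminus\{i\}$ and $(\mathbf{w}(i),\mathbf{w}(n))$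 equals: $(\mathbf{v}(i),\mathbf{v}(n))$ if $|\psi|=\psi(i)=1$; $(\mathbf{v}(i),\mathbf{v}(n)-\frac{\mathbf{v}(i)-\mathbf{v}(n)}{|\psi|-1})$ if $|\psi|>\psi(i)=1$; $(\mathbf{x}+\mathbf{v}(n),\frac{\mathbf{x}}{|\psi|+1}+\mathbf{v}(n))$ with $\mathbf{x}\sim\eta$ if $\psi(i)=0$. Define $\mu(\mathsf{x},B)=\sum_{i\in[n]}r_i(\psi)\lambda_i^{\mathsf{x}}(B)$ for Borel sets $B\subseteq\mathsf{X}$ (i.e. the restriction of $\sum_i r_i(\psi)\lambda_i^{\mathsf{x}}$ to Borel subsets of $\mathsf{X}$). *)

theory Defs
  imports "HOL-Probability.Probability"
begin

definition borel_of :: "'a topology \<Rightarrow> 'a measure" where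
  "borel_of T = sigma (topspace T) {S. openin T S}"

text \<open>Ambient space {0,1}^[n] x E^[n+1] with the product topology
  (discrete on {0,1}, Euclidean on E = real^'N). Elements of the
  function spaces are extensional functions on [n] = {..<n}.\<close>
definition amb_top :: "nat \<Rightarrow> ((nat \<Rightarrow> nat) \<times> (nat \<Rightarrow> real^'N)) topology" where
  "amb_top n = prod_topology (product_topology (\<lambda>_. discrete_topology {0,1}) {..<n})
                             (product_topology (\<lambda>_. euclidean) {..<Suc n})"

definition cardpsi :: "nat \<Rightarrow> (nat \<Rightarrow> nat) \<Rightarrow> nat" where
  "cardpsi n \<psi> = (\<Sum>i<n. \<psi> i)"

definition Xset :: "nat \<Rightarrow> ((nat \<Rightarrow> nat) \<times> (nat \<Rightarrow> real^'N)) set" where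
  "Xset n = {(\<psi>, v) \<in> topspace (amb_top n).
              (\<Sum>i<n. real (\<psi> i) *\<^sub>R (v i - v n)) = 0}"

definition XM :: "nat \<Rightarrow> ((nat \<Rightarrow> nat) \<times> (nat \<Rightarrow> real^'N)) measure" where
  "XM n = borel_of (subtopology (amb_top n) (Xset n))"

definition rate :: "real \<Rightarrow> real \<Rightarrow> nat \<Rightarrow> (nat \<Rightarrow> nat) \<Rightarrow> nat \<Rightarrow> real" where
  "rate ta td n \<psi> i =
     (td * real (\<psi> i) + ta * (1 - real (\<psi> i))) /
     (td * real (cardpsi n \<psi>) + ta * (real n - real (cardpsi n \<psi>)))"

definition flip :: "nat \<Rightarrow> (nat \<Rightarrow> nat) \<Rightarrow> nat \<Rightarrow> nat" where
  "flip i \<psi> = \<psi>(i := 1 - \<psi> i)"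

definition lam :: "nat \<Rightarrow> (real^'N) measure \<Rightarrow> nat \<Rightarrow>
      (nat \<Rightarrow> nat) \<times> (nat \<Rightarrow> real^'N) \<Rightarrow> ((nat \<Rightarrow> nat) \<times> (nat \<Rightarrow> real^'N)) measure" where
  "lam n eta i s =
     (case s of (\<psi>, v) \<Rightarrow>
       (if \<psi> i = 1 then
          (if cardpsi n \<psi> = 1 then return (borel_of (amb_top n)) (flip i \<psi>, v)
           else return (borel_of (amb_top n))
                  (flip i \<psi>, v(n := v n - (1 / (real (cardpsi n \<psi>) - 1)) *\<^sub>R (v i - v n))))
        else distr eta (borel_of (amb_top n))
               (\<lambda>x. (flip i \<psi>, v(i := x + v n, n := (1 / (real (cardpsi n \<psi>) + 1)) *\<^sub>R x + v n)))))"

definition mu :: "real \<Rightarrow> real \<Rightarrow> nat \<Rightarrow> (real^'N) measure \<Rightarrow>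
      (nat \<Rightarrow> nat) \<times> (nat \<Rightarrow> real^'N) \<Rightarrow> ((nat \<Rightarrow> nat) \<times> (nat \<Rightarrow> real^'N)) set \<Rightarrow> real" where
  "mu ta td n eta s B = (\<Sum>i<n. rate ta td n (fst s) i * measure (lam n eta i s) B)"

end

theory Submission
  imports Defs
begin


lemma space_borel_of [simp]: "space (borel_of T) = topspace T"
  unfolding borel_of_def by (rule space_measure_of) (auto dest: openin_subset)

lemma sets_borel_of: "sets (borel_of T) = sigma_sets (topspace T) {S. openin T S}"
  unfolding borel_of_def by (rule sets_measure_of) (auto dest: openin_subset)

lemma openin_in_borel_of: "openin T S \<Longrightarrow> S \<in> sets (borel_of T)"
  by (simp add: sets_borel_of)

lemma borel_of_euclidean [simp]: "borel_of euclidean = borel"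
  unfolding borel_of_def borel_def by simp

lemma measurable_continuous_map:
  assumes "continuous_map X Y f" shows "f \<in> borel_of X \<rightarrow>\<^sub>M borel_of Y"
  unfolding borel_of_def[of Y]
proof (rule measurable_measure_of)
  show "{S. openin Y S} \<subseteq> Pow (topspace Y)" by (auto dest: openin_subset)
  show "f \<in> space (borel_of X) \<rightarrow> topspace Y" using assms by (auto simp: continuous_map_def)
  fix U assume "U \<in> {S. openin Y S}"
  then have "openin X {x \<in> topspace X. f x \<in> U}" using assms by (auto simp: continuous_map_def)
  moreover have "{x \<in> topspace X. f x \<in> U} = f -` U \<inter> space (borel_of X)" by auto
  ultimately show "f -` U \<inter> space (borel_of X) \<in> sets (borel_of X)"
    by (metis openin_in_borel_of)
qed

lemma measurable_borel_of_base:
  assumes sc: "second_countable T"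
    and base: "\<And>U x. openin T U \<Longrightarrow> x \<in> U \<Longrightarrow> \<exists>W. G W \<and> x \<in> W \<and> W \<subseteq> U"
    and Gopen: "\<And>W. G W \<Longrightarrow> openin T W"
    and f: "f \<in> space M \<rightarrow> topspace T"
    and pre: "\<And>W. G W \<Longrightarrow> f -` W \<inter> space M \<in> sets M"
  shows "f \<in> M \<rightarrow>\<^sub>M borel_of T"
  unfolding borel_of_def
proof (rule measurable_measure_of)
  show "{S. openin T S} \<subseteq> Pow (topspace T)" by (auto dest: openin_subset)
  show "f \<in> space M \<rightarrow> topspace T" by (rule f)
  fix U assume "U \<in> {S. openin T S}"
  then have U: "openin T U" by simp
  obtain \<B> where B: "countable \<B>" "\<And>V. V \<in> \<B> \<Longrightarrow> openin T V"
    "\<And>U x. openin T U \<Longrightarrow> x \<in> U \<Longrightarrow> \<exists>V \<in> \<B>. x \<in> V \<and> V \<subseteq> U"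
    using sc unfolding second_countable_def by metis
  define J where "J = {B \<in> \<B>. \<exists>W. G W \<and> B \<subseteq> W \<and> W \<subseteq> U}"
  define w where "w B = (SOME W. G W \<and> B \<subseteq> W \<and> W \<subseteq> U)" for B
  have w: "G (w B) \<and> B \<subseteq> w B \<and> w B \<subseteq> U" if "B \<in> J" for B
    using that unfolding J_def w_def by (metis (mono_tags, lifting) mem_Collect_eq someI_ex)
  have "U = (\<Union>B\<in>J. w B)"
  proof
    show "(\<Union>B\<in>J. w B) \<subseteq> U" using w by blast
    show "U \<subseteq> (\<Union>B\<in>J. w B)"
    proof
      fix x assume "x \<in> U"
      then obtain W where W: "G W" "x \<in> W" "W \<subseteq> U" using base U by blast
      then obtain V where V: "V \<in> \<B>" "x \<in> V" "V \<subseteq> W" using B(3)[OF Gopen[OF W(1)]] by blast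
      then have "V \<in> J" using W unfolding J_def by blast
      then show "x \<in> (\<Union>B\<in>J. w B)" using w[of V] V by blast
    qed
  qed
  then have "f -` U \<inter> space M = (\<Union>B\<in>J. f -` w B \<inter> space M)" by blast
  also have "\<dots> \<in> sets M"
    using w pre B(1) unfolding J_def
    by (intro sets.countable_UN'') (auto intro: countable_subset[of _ \<B>])
  finally show "f -` U \<inter> space M \<in> sets M" .
qed

lemma second_countable_euclidean:
  "second_countable (euclidean :: 'a::second_countable_topology topology)"
proof -
  obtain B :: "'a set set" where B: "countable B" "topological_basis B"
    using ex_countable_basis by blast
  show ?thesis unfolding second_countable_def
  proof (intro exI[of _ B] conjI ballI allI impI)
    show "countable B" by (rule B(1))
    show "openin euclidean V" if "V \<in> B" for V using B(2) that by (simp add: topological_basis_def)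
    fix U and x :: 'a assume "openin euclidean U \<and> x \<in> U"
    then show "\<exists>V\<in>B. x \<in> V \<and> V \<subseteq> U" using B(2) by (metis open_openin topological_basisE)
  qed
qed

lemma second_countable_prod_topology:
  assumes "second_countable X" "second_countable Y"
  shows "second_countable (prod_topology X Y)"
proof -
  obtain B1 where B1: "countable B1" "\<And>V. V \<in> B1 \<Longrightarrow> openin X V"
    "\<And>U x. openin X U \<Longrightarrow> x \<in> U \<Longrightarrow> \<exists>V \<in> B1. x \<in> V \<and> V \<subseteq> U"
    using assms(1) unfolding second_countable_def by metis
  obtain B2 where B2: "countable B2" "\<And>V. V \<in> B2 \<Longrightarrow> openin Y V"
    "\<And>U x. openin Y U \<Longrightarrow> x \<in> U \<Longrightarrow> \<exists>V \<in> B2. x \<in> V \<and> V \<subseteq> U"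
    using assms(2) unfolding second_countable_def by metis
  show ?thesis unfolding second_countable_def
  proof (intro exI[of _ "(\<lambda>(S,T). S \<times> T) ` (B1 \<times> B2)"] conjI ballI allI impI)
    show "countable ((\<lambda>(S,T). S \<times> T) ` (B1 \<times> B2))" using B1(1) B2(1) by (intro countable_image countable_SIGMA)
    show "openin (prod_topology X Y) V" if V: "V \<in> (\<lambda>(S,T). S \<times> T) ` (B1 \<times> B2)" for V
    proof -
      from V obtain q where q: "q \<in> B1 \<times> B2" "V = (\<lambda>(S,T). S \<times> T) q" by (rule imageE)
      then show ?thesis using B1(2) B2(2) by (cases q) (simp add: openin_prod_Times_iff)
    qed
    fix U p assume "openin (prod_topology X Y) U \<and> p \<in> U"
    then have U: "openin (prod_topology X Y) U" and pU: "(fst p, snd p) \<in> U" by simp_all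
    have "\<exists>S T. openin X S \<and> openin Y T \<and> fst p \<in> S \<and> snd p \<in> T \<and> S \<times> T \<subseteq> U"
      using iffD1[OF openin_prod_topology_alt U, rule_format, OF pU] .
    then obtain S T where ST: "openin X S" "openin Y T" "fst p \<in> S" "snd p \<in> T" "S \<times> T \<subseteq> U"
      by (elim exE conjE)
    obtain V1 where "V1 \<in> B1" "fst p \<in> V1" "V1 \<subseteq> S" using B1(3) ST by blast
    moreover obtain V2 where "V2 \<in> B2" "snd p \<in> V2" "V2 \<subseteq> T" using B2(3) ST by blast
    ultimately show "\<exists>V\<in>(\<lambda>(S,T). S \<times> T) ` (B1 \<times> B2). p \<in> V \<and> V \<subseteq> U"
    proof (intro bexI[of _ "V1 \<times> V2"] conjI)
      show "V1 \<times> V2 \<in> (\<lambda>(S,T). S \<times> T) ` (B1 \<times> B2)"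
        using \<open>V1 \<in> B1\<close> \<open>V2 \<in> B2\<close> by (rule_tac image_eqI[of _ _ "(V1,V2)"]) auto
      show "p \<in> V1 \<times> V2" using \<open>fst p \<in> V1\<close> \<open>snd p \<in> V2\<close> by (simp add: mem_Times_iff)
      show "V1 \<times> V2 \<subseteq> U" using ST(5) \<open>V1 \<subseteq> S\<close> \<open>V2 \<subseteq> T\<close> by blast
    qed
  qed
qed

lemma second_countable_finite_topspace:
  assumes "finite (topspace X)" shows "second_countable X"
  unfolding second_countable_def
proof (intro exI[of _ "Collect (openin X)"] conjI ballI allI impI)
  have "Collect (openin X) \<subseteq> Pow (topspace X)" by (auto dest: openin_subset)
  then show "countable (Collect (openin X))" using assms by (meson countable_finite finite_Pow_iff finite_subset)
qed blast+



lemma measurable_prod_topology: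
  assumes sc: "second_countable (prod_topology X Y)"
    and f: "f \<in> M \<rightarrow>\<^sub>M borel_of X" and g: "g \<in> M \<rightarrow>\<^sub>M borel_of Y"
  shows "(\<lambda>x. (f x, g x)) \<in> M \<rightarrow>\<^sub>M borel_of (prod_topology X Y)"
proof (rule measurable_borel_of_base[OF sc, where G="\<lambda>W. \<exists>S T. W = S \<times> T \<and> openin X S \<and> openin Y T"])
  fix U p assume U: "openin (prod_topology X Y) U" and pU0: "p \<in> U"
  then have pU: "(fst p, snd p) \<in> U" by simp
  have "\<exists>S T. openin X S \<and> openin Y T \<and> fst p \<in> S \<and> snd p \<in> T \<and> S \<times> T \<subseteq> U"
    using iffD1[OF openin_prod_topology_alt U, rule_format, OF pU] .
  then obtain S T where ST: "openin X S" "openin Y T" "fst p \<in> S" "snd p \<in> T" "S \<times> T \<subseteq> U"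
    by (elim exE conjE)
  have "p \<in> S \<times> T" using ST(3,4) by (simp add: mem_Times_iff)
  then show "\<exists>W. (\<exists>S T. W = S \<times> T \<and> openin X S \<and> openin Y T) \<and> p \<in> W \<and> W \<subseteq> U"
    using ST by (intro exI[of _ "S \<times> T"]) (intro conjI exI, rule refl, simp_all)
next
  fix W assume "\<exists>S T. W = S \<times> T \<and> openin X S \<and> openin Y T"
  then obtain S T where "W = S \<times> T" "openin X S" "openin Y T" by (elim exE conjE)
  then show "openin (prod_topology X Y) W" by (simp add: openin_prod_Times_iff)
next
  show "(\<lambda>x. (f x, g x)) \<in> space M \<rightarrow> topspace (prod_topology X Y)"
  proof
    fix x assume "x \<in> space M"
    then have "f x \<in> topspace X" "g x \<in> topspace Y"
      using measurable_space[OF f] measurable_space[OF g] by simp_all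
    then show "(f x, g x) \<in> topspace (prod_topology X Y)" by simp
  qed
next
  fix W assume "\<exists>S T. W = S \<times> T \<and> openin X S \<and> openin Y T"
  then obtain S T where W: "W = S \<times> T" "openin X S" "openin Y T" by (elim exE conjE)
  have "(\<lambda>x. (f x, g x)) -` W \<inter> space M = (f -` S \<inter> space M) \<inter> (g -` T \<inter> space M)"
    using W(1) by auto
  also have "\<dots> \<in> sets M"
    using measurable_sets[OF f openin_in_borel_of[OF W(2)]] measurable_sets[OF g openin_in_borel_of[OF W(3)]]
    by (rule sets.Int)
  finally show "(\<lambda>x. (f x, g x)) -` W \<inter> space M \<in> sets M" .
qed

lemma measurable_product_topology:
  assumes sc: "second_countable (product_topology X I)"
    and comp: "\<And>i. i \<in> I \<Longrightarrow> (\<lambda>x. f x i) \<in> M \<rightarrow>\<^sub>M borel_of (X i)"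
    and ext: "\<And>x. x \<in> space M \<Longrightarrow> f x \<in> extensional I"
  shows "f \<in> M \<rightarrow>\<^sub>M borel_of (product_topology X I)"
proof -
  define C where "C = (\<lambda>F. \<exists>i U. F = {f. f i \<in> U} \<and> i \<in> I \<and> openin (X i) U)"
  define P where "P = product_topology X I"
  have opP: "openin P = arbitrary union_of ((finite intersection_of C) relative_to topspace P)"
    unfolding P_def C_def by (rule openin_product_topology)
  have ftop: "f x \<in> topspace P" if "x \<in> space M" for x
  proof -
    have "f x i \<in> topspace (X i)" if "i \<in> I" for i
      using measurable_space[OF comp[OF that]] \<open>x \<in> space M\<close> by simp
    then show ?thesis using ext[OF that] unfolding P_def by (simp add: PiE_iff)
  qed
  have fin: "{x \<in> space M. f x \<in> \<Inter>\<V>} \<in> sets M" if "finite \<V>" "\<V> \<subseteq> Collect C" for \<V>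
    using that
  proof (induction \<V> rule: finite_induct)
    case empty
    then show ?case by simp
  next
    case (insert V \<V>)
    then have "C V" by simp
    then obtain i U where V: "V = {f. f i \<in> U}" "i \<in> I" "openin (X i) U" unfolding C_def by (elim exE conjE)
    have eq: "{x \<in> space M. f x \<in> \<Inter>(insert V \<V>)} = ((\<lambda>x. f x i) -` U \<inter> space M) \<inter> {x \<in> space M. f x \<in> \<Inter>\<V>}"
      using V(1) by (auto simp: set_eq_iff)
    have IH: "{x \<in> space M. f x \<in> \<Inter>\<V>} \<in> sets M" using insert by simp
    show ?case unfolding eq
      by (rule sets.Int[OF measurable_sets[OF comp[OF V(2)] openin_in_borel_of[OF V(3)]] IH])
  qed
  show ?thesis unfolding P_def[symmetric]
  proof (rule measurable_borel_of_base[where G="\<lambda>W. openin P W \<and> ((finite intersection_of C) relative_to topspace P) W"])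
    show "second_countable P" using sc unfolding P_def .
  next
    fix U x assume U: "openin P U" and xU: "x \<in> U"
    then obtain \<U> where U': "\<U> \<subseteq> Collect ((finite intersection_of C) relative_to topspace P)" "\<Union>\<U> = U"
      unfolding opP union_of_def by blast
    then obtain W where W: "W \<in> \<U>" "x \<in> W" using xU by blast
    have Wr: "((finite intersection_of C) relative_to topspace P) W" using U'(1) W(1) by blast
    have "openin P W" unfolding opP by (rule arbitrary_union_of_inc) (rule Wr)
    then show "\<exists>W. (openin P W \<and> ((finite intersection_of C) relative_to topspace P) W) \<and> x \<in> W \<and> W \<subseteq> U"
      using Wr W U'(2) by blast
  next
    show "openin P W" if "openin P W \<and> ((finite intersection_of C) relative_to topspace P) W" for W
      using that by simp
  next
    show "f \<in> space M \<rightarrow> topspace P" using ftop by blast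
  next
    fix W assume "openin P W \<and> ((finite intersection_of C) relative_to topspace P) W"
    then obtain W0 where "(finite intersection_of C) W0" "topspace P \<inter> W0 = W"
      unfolding relative_to_def by blast
    then obtain \<V> where V: "finite \<V>" "\<V> \<subseteq> Collect C" "\<Inter>\<V> = W0" "topspace P \<inter> W0 = W"
      unfolding intersection_of_def by blast
    have "f -` W \<inter> space M = {x \<in> space M. f x \<in> \<Inter>\<V>}"
      using V(3,4) ftop by blast
    then show "f -` W \<inter> space M \<in> sets M" using fin[OF V(1,2)] by simp
  qed
qed

lemma second_countable_product_euclidean:
  "second_countable (product_topology (\<lambda>_. (euclidean :: 'a::second_countable_topology topology)) (I :: 'i::countable set))"
proof (rule second_countable_retraction_map_image[OF _ second_countable_euclidean])
  show "retraction_map (euclidean :: ('i \<Rightarrow> 'a) topology) (product_topology (\<lambda>_. euclidean) I) (\<lambda>v. restrict v I)"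
    unfolding retraction_map_def retraction_maps_def
  proof (intro exI[of _ "\<lambda>v. v"] conjI ballI)
    show "continuous_map euclidean (product_topology (\<lambda>_. euclidean) I) (\<lambda>v::'i\<Rightarrow>'a. restrict v I)"
      unfolding continuous_map_componentwise
    proof (intro conjI ballI)
      show "(\<lambda>v::'i\<Rightarrow>'a. restrict v I) ` topspace euclidean \<subseteq> extensional I" by auto
      fix k assume k: "k \<in> I"
      have "continuous_map (product_topology (\<lambda>i. euclidean::'a topology) UNIV) euclidean (\<lambda>x. x k)"
        by (rule continuous_map_product_projection) simp
      then have "continuous_map euclidean euclidean (\<lambda>x::'i\<Rightarrow>'a. x k)"
        by (simp add: euclidean_product_topology)
      then show "continuous_map euclidean euclidean (\<lambda>x::'i\<Rightarrow>'a. restrict x I k)"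
        using k by simp
    qed
    have "continuous_map (product_topology (\<lambda>_. euclidean) I) (product_topology (\<lambda>i. euclidean::'a topology) UNIV) (\<lambda>v. v)"
      unfolding continuous_map_componentwise_UNIV
    proof
      fix k
      show "continuous_map (product_topology (\<lambda>_. euclidean) I) euclidean (\<lambda>x::'i\<Rightarrow>'a. x k)"
      proof (cases "k \<in> I")
        case True
        then show ?thesis by (metis continuous_map_product_projection)
      next
        case False
        have "continuous_map (product_topology (\<lambda>_. euclidean) I) (euclidean::'a topology) (\<lambda>x::'i\<Rightarrow>'a. undefined)"
          by simp
        then show ?thesis
          by (rule continuous_map_eq) (use False in \<open>auto simp: PiE_def extensional_def\<close>)
      qed
    qed
    then show "continuous_map (product_topology (\<lambda>_. euclidean) I) euclidean (\<lambda>v::'i\<Rightarrow>'a. v)"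
      by (simp add: euclidean_product_topology)
    fix v assume "v \<in> topspace (product_topology (\<lambda>_. euclidean::'a topology) I)"
    then show "restrict v I = v" by simp
  qed
qed




abbreviation P1 :: "nat \<Rightarrow> (nat \<Rightarrow> nat) topology" where
  "P1 n \<equiv> product_topology (\<lambda>_. discrete_topology {0,1}) {..<n}"
abbreviation P2 :: "nat \<Rightarrow> (nat \<Rightarrow> real^'N) topology" where
  "P2 n \<equiv> product_topology (\<lambda>_. euclidean) {..<Suc n}"
abbreviation XT :: "nat \<Rightarrow> ((nat \<Rightarrow> nat) \<times> (nat \<Rightarrow> real^'N)) topology" where
  "XT n \<equiv> subtopology (amb_top n) (Xset n)"

lemma amb_top_eq: "amb_top n = prod_topology (P1 n) (P2 n)"
  by (simp add: amb_top_def)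

lemma topspace_amb: "topspace (amb_top n) =
   (\<Pi>\<^sub>E i\<in>{..<n}. {0,1}) \<times> (\<Pi>\<^sub>E i\<in>{..<Suc n}. (UNIV :: (real^'N) set))"
  by (simp add: amb_top_def)

lemma second_countable_P1: "second_countable (P1 n)"
  by (rule second_countable_finite_topspace) (simp add: finite_PiE)

lemma second_countable_P2: "second_countable (P2 n :: (nat \<Rightarrow> real^'N) topology)"
  by (rule second_countable_product_euclidean)

lemma second_countable_amb: "second_countable (amb_top n :: ((nat \<Rightarrow> nat) \<times> (nat \<Rightarrow> real^'N)) topology)"
  unfolding amb_top_eq by (rule second_countable_prod_topology[OF second_countable_P1 second_countable_P2])

lemma Xset_alt: "Xset n = {s \<in> topspace (amb_top n). (\<Sum>i<n. real (fst s i) *\<^sub>R (snd s i - snd s n)) = 0}"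
  by (auto simp: Xset_def)

lemma Xset_sub: "Xset n \<subseteq> topspace (amb_top n)"
  by (auto simp: Xset_def)

lemma topspace_XT: "topspace (XT n) = Xset n"
  by (simp add: Int_absorb1[OF Xset_sub])

lemma space_XM: "space (XM n) = Xset n"
  by (simp add: XM_def Int_absorb1[OF Xset_sub])

lemma cont_fst_comp:
  assumes "j < n"
  shows "continuous_map (amb_top n) (discrete_topology {0,1}) (\<lambda>s. fst s j)"
proof -
  have "continuous_map (P1 n) (discrete_topology {0,1}) (\<lambda>x. x j)"
    using assms by (metis continuous_map_product_projection lessThan_iff)
  then have "continuous_map (amb_top n) (discrete_topology {0,1}) ((\<lambda>x. x j) \<circ> fst)"
    unfolding amb_top_eq by (rule continuous_map_compose[OF continuous_map_fst])
  then show ?thesis by (simp add: o_def)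
qed

lemma cont_snd_comp:
  assumes "j \<le> n"
  shows "continuous_map (amb_top n :: ((nat \<Rightarrow> nat) \<times> (nat \<Rightarrow> real^'N)) topology) euclidean (\<lambda>s. snd s j)"
proof -
  have "continuous_map (P2 n :: (nat \<Rightarrow> real^'N) topology) euclidean (\<lambda>x. x j)"
    using assms by (metis continuous_map_product_projection lessThan_iff less_Suc_eq_le)
  then have "continuous_map (amb_top n :: ((nat \<Rightarrow> nat) \<times> (nat \<Rightarrow> real^'N)) topology) euclidean ((\<lambda>x. x j) \<circ> snd)"
    unfolding amb_top_eq by (rule continuous_map_compose[OF continuous_map_snd])
  then show ?thesis by (simp add: o_def)
qed

lemma cont_fst_real:
  assumes "j < n"
  shows "continuous_map (amb_top n) euclidean (\<lambda>s. real (fst s j))"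
proof -
  have "continuous_map (discrete_topology {0,1}) euclidean (\<lambda>a::nat. real a)" by simp
  then have "continuous_map (amb_top n) euclidean ((\<lambda>a::nat. real a) \<circ> (\<lambda>s. fst s j))"
    by (rule continuous_map_compose[OF cont_fst_comp[OF assms]])
  then show ?thesis by (simp add: o_def)
qed

lemma meas_amb_fst: "j < n \<Longrightarrow> (\<lambda>s. real (fst s j)) \<in> borel_measurable (borel_of (amb_top n))"
  using measurable_continuous_map[OF cont_fst_real] by simp

lemma meas_amb_snd: "j \<le> n \<Longrightarrow> (\<lambda>s. snd s j :: real^'N) \<in> borel_of (amb_top n) \<rightarrow>\<^sub>M borel"
  using measurable_continuous_map[OF cont_snd_comp] by simp

lemma meas_XM_fst: "j < n \<Longrightarrow> (\<lambda>s. real (fst s j)) \<in> borel_measurable (XM n :: ((nat \<Rightarrow> nat) \<times> (nat \<Rightarrow> real^'N)) measure)"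
  unfolding XM_def using measurable_continuous_map[OF continuous_map_from_subtopology[OF cont_fst_real]] by simp

lemma meas_XM_snd: "j \<le> n \<Longrightarrow> (\<lambda>s. snd s j :: real^'N) \<in> XM n \<rightarrow>\<^sub>M borel"
  unfolding XM_def using measurable_continuous_map[OF continuous_map_from_subtopology[OF cont_snd_comp]] by simp

lemma Xset_in_sets: "Xset n \<in> sets (borel_of (amb_top n) :: ((nat \<Rightarrow> nat) \<times> (nat \<Rightarrow> real^'N)) measure)"
proof -
  let ?M = "borel_of (amb_top n) :: ((nat \<Rightarrow> nat) \<times> (nat \<Rightarrow> real^'N)) measure"
  have [measurable]: "(\<lambda>s. real (fst s j)) \<in> borel_measurable ?M" if "j \<in> {..<n}" for j
    using meas_amb_fst[of j n] that by simp
  have [measurable]: "(\<lambda>s. snd s j :: real^'N) \<in> ?M \<rightarrow>\<^sub>M borel" if "j \<in> {..<n}" for j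
    using meas_amb_snd[of j n] that by simp
  have [measurable]: "(\<lambda>s. snd s n :: real^'N) \<in> ?M \<rightarrow>\<^sub>M borel"
    using meas_amb_snd[of n n] by simp
  have F: "(\<lambda>s. \<Sum>i<n. real (fst s i) *\<^sub>R (snd s i - snd s n)) \<in> ?M \<rightarrow>\<^sub>M borel"
    by measurable
  have "Xset n = (\<lambda>s. \<Sum>i<n. real (fst s i) *\<^sub>R (snd s i - snd s n)) -` {0} \<inter> space ?M"
    unfolding Xset_alt by auto
  also have "\<dots> \<in> sets ?M" by (rule measurable_sets[OF F]) simp
  finally show ?thesis .
qed

lemma sets_XM_sub:
  assumes "B \<in> sets (XM n)"
  shows "B \<in> sets (borel_of (amb_top n) :: ((nat \<Rightarrow> nat) \<times> (nat \<Rightarrow> real^'N)) measure)"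
proof -
  let ?M = "borel_of (amb_top n) :: ((nat \<Rightarrow> nat) \<times> (nat \<Rightarrow> real^'N)) measure"
  have "B \<in> sigma_sets (Xset n) {S. openin (XT n) S}"
    using assms unfolding XM_def sets_borel_of topspace_XT .
  then show ?thesis
  proof induction
    case (Basic a)
    then obtain U where "openin (amb_top n) U" "a = U \<inter> Xset n"
      by (auto simp: openin_subtopology)
    then show ?case using Xset_in_sets by (auto intro: sets.Int openin_in_borel_of)
  next
    case Empty
    then show ?case by simp
  next
    case (Compl a)
    then show ?case using Xset_in_sets by (auto intro: sets.Diff)
  next
    case (Union a)
    then show ?case by (auto intro: sets.countable_UN)
  qed
qed



definition G2 :: "nat \<Rightarrow> nat \<Rightarrow> (nat \<Rightarrow> nat) \<times> (nat \<Rightarrow> real^'N) \<Rightarrow> (nat \<Rightarrow> nat) \<times> (nat \<Rightarrow> real^'N)" where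
  "G2 n i s = (flip i (fst s), (snd s)(n := snd s n - (1 / (real (cardpsi n (fst s)) - 1)) *\<^sub>R (snd s i - snd s n)))"

definition HH :: "nat \<Rightarrow> nat \<Rightarrow> ((nat \<Rightarrow> nat) \<times> (nat \<Rightarrow> real^'N)) \<times> (real^'N) \<Rightarrow> (nat \<Rightarrow> nat) \<times> (nat \<Rightarrow> real^'N)" where
  "HH n i p = (flip i (fst (fst p)), (snd (fst p))(i := snd p + snd (fst p) n,
       n := (1 / (real (cardpsi n (fst (fst p))) + 1)) *\<^sub>R snd p + snd (fst p) n))"

lemma lam_eq: "lam n eta i s =
  (if fst s i = 1 then
     (if cardpsi n (fst s) = 1 then return (borel_of (amb_top n)) (flip i (fst s), snd s)
      else return (borel_of (amb_top n)) (G2 n i s))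
   else distr eta (borel_of (amb_top n)) (\<lambda>x. HH n i (s, x)))"
  by (cases s) (simp add: lam_def G2_def HH_def)

lemma cont_flip:
  assumes i: "i < n"
  shows "continuous_map (amb_top n :: ((nat \<Rightarrow> nat) \<times> (nat \<Rightarrow> real^'N)) topology) (P1 n) (\<lambda>s. flip i (fst s))"
  unfolding continuous_map_componentwise
proof (intro conjI ballI)
  show "(\<lambda>s. flip i (fst s)) ` topspace (amb_top n :: ((nat \<Rightarrow> nat) \<times> (nat \<Rightarrow> real^'N)) topology) \<subseteq> extensional {..<n}"
    using i by (auto simp: topspace_amb flip_def extensional_def PiE_def)
  fix k assume k: "k \<in> {..<n}"
  show "continuous_map (amb_top n :: ((nat \<Rightarrow> nat) \<times> (nat \<Rightarrow> real^'N)) topology) (discrete_topology {0, 1}) (\<lambda>x. flip i (fst x) k)"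
  proof (cases "k = i")
    case True
    have "continuous_map (discrete_topology {0,1}) (discrete_topology {0,1}) (\<lambda>a::nat. 1 - a)" by auto
    then have "continuous_map (amb_top n :: ((nat \<Rightarrow> nat) \<times> (nat \<Rightarrow> real^'N)) topology) (discrete_topology {0,1}) ((\<lambda>a::nat. 1 - a) \<circ> (\<lambda>s. fst s i))"
      by (rule continuous_map_compose[OF cont_fst_comp[OF i]])
    then show ?thesis using True by (simp add: o_def flip_def)
  next
    case False
    then show ?thesis using cont_fst_comp[of k n] k by (simp add: flip_def)
  qed
qed

lemma meas_XM_flip: "i < n \<Longrightarrow> (\<lambda>s. flip i (fst s)) \<in> (XM n :: ((nat \<Rightarrow> nat) \<times> (nat \<Rightarrow> real^'N)) measure) \<rightarrow>\<^sub>M borel_of (P1 n)"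
  unfolding XM_def by (rule measurable_continuous_map[OF continuous_map_from_subtopology[OF cont_flip]])

lemma meas_XM_card: "(\<lambda>s. real (cardpsi n (fst s))) \<in> borel_measurable (XM n :: ((nat \<Rightarrow> nat) \<times> (nat \<Rightarrow> real^'N)) measure)"
proof -
  have [measurable]: "(\<lambda>s. real (fst s j)) \<in> borel_measurable (XM n :: ((nat \<Rightarrow> nat) \<times> (nat \<Rightarrow> real^'N)) measure)" if "j \<in> {..<n}" for j
    using meas_XM_fst[of j n] that by simp
  have "(\<lambda>s. \<Sum>j<n. real (fst s j)) \<in> borel_measurable (XM n :: ((nat \<Rightarrow> nat) \<times> (nat \<Rightarrow> real^'N)) measure)"
    by measurable
  then show ?thesis by (simp add: cardpsi_def of_nat_sum)
qed

lemma sc_amb': "second_countable (prod_topology (P1 n) (P2 n :: (nat \<Rightarrow> real^'N) topology))"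
  by (rule second_countable_prod_topology[OF second_countable_P1 second_countable_P2])

lemma snd_XM_PiE: "s \<in> space (XM n :: ((nat \<Rightarrow> nat) \<times> (nat \<Rightarrow> real^'N)) measure) \<Longrightarrow> snd s \<in> (\<Pi>\<^sub>E i\<in>{..<Suc n}. UNIV)"
  using subsetD[OF Xset_sub, of s n] by (simp add: space_XM topspace_amb mem_Times_iff)

lemma fst_XM_PiE: "s \<in> space (XM n :: ((nat \<Rightarrow> nat) \<times> (nat \<Rightarrow> real^'N)) measure) \<Longrightarrow> fst s \<in> (\<Pi>\<^sub>E i\<in>{..<n}. {0,1})"
  using subsetD[OF Xset_sub, of s n] by (simp add: space_XM topspace_amb mem_Times_iff)

lemma meas_G2:
  assumes i: "i < n"
  shows "G2 n i \<in> (XM n :: ((nat \<Rightarrow> nat) \<times> (nat \<Rightarrow> real^'N)) measure) \<rightarrow>\<^sub>M borel_of (amb_top n)"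
proof -
  let ?M = "XM n :: ((nat \<Rightarrow> nat) \<times> (nat \<Rightarrow> real^'N)) measure"
  have [measurable]: "(\<lambda>s. snd s j :: real^'N) \<in> ?M \<rightarrow>\<^sub>M borel" if "j \<in> {..<Suc n}" for j
    using meas_XM_snd[of j n] that by simp
  have [measurable]: "(\<lambda>s. real (cardpsi n (fst s))) \<in> borel_measurable ?M" by (rule meas_XM_card)
  have in1: "i \<in> {..<Suc n}" "n \<in> {..<Suc n}" using i by auto
  have snd_part: "(\<lambda>s. (snd s)(n := snd s n - (1 / (real (cardpsi n (fst s)) - 1)) *\<^sub>R (snd s i - snd s n)))
      \<in> ?M \<rightarrow>\<^sub>M borel_of (P2 n)"
  proof (rule measurable_product_topology[OF second_countable_P2])
    fix k assume k: "k \<in> {..<Suc n}"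
    show "(\<lambda>s. ((snd s)(n := snd s n - (1 / (real (cardpsi n (fst s)) - 1)) *\<^sub>R (snd s i - snd s n))) k) \<in> ?M \<rightarrow>\<^sub>M borel_of euclidean"
    proof (cases "k = n")
      case True
      show ?thesis unfolding True borel_of_euclidean using in1 by simp measurable
    next
      case False
      show ?thesis unfolding borel_of_euclidean using False k by simp
    qed
  next
    fix s assume "s \<in> space ?M"
    then show "(snd s)(n := snd s n - (1 / (real (cardpsi n (fst s)) - 1)) *\<^sub>R (snd s i - snd s n)) \<in> extensional {..<Suc n}"
      using snd_XM_PiE[of s n] by (auto simp: extensional_def PiE_def)
  qed
  show ?thesis unfolding G2_def amb_top_eq
    by (rule measurable_prod_topology[OF sc_amb' meas_XM_flip[OF i] snd_part])
qed

lemma meas_G1: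
  assumes i: "i < n"
  shows "(\<lambda>s. (flip i (fst s), snd s)) \<in> (XM n :: ((nat \<Rightarrow> nat) \<times> (nat \<Rightarrow> real^'N)) measure) \<rightarrow>\<^sub>M borel_of (amb_top n)"
proof -
  let ?M = "XM n :: ((nat \<Rightarrow> nat) \<times> (nat \<Rightarrow> real^'N)) measure"
  have snd_part: "(\<lambda>s. snd s) \<in> ?M \<rightarrow>\<^sub>M borel_of (P2 n)"
  proof (rule measurable_product_topology[OF second_countable_P2])
    fix k assume k: "k \<in> {..<Suc n}"
    show "(\<lambda>s. snd s k) \<in> ?M \<rightarrow>\<^sub>M borel_of euclidean"
      unfolding borel_of_euclidean using meas_XM_snd[of k n] k by simp
  next
    fix s assume "s \<in> space ?M"
    then show "snd s \<in> extensional {..<Suc n}" using snd_XM_PiE[of s n] by (auto simp: PiE_def)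
  qed
  show ?thesis unfolding amb_top_eq
    by (rule measurable_prod_topology[OF sc_amb' meas_XM_flip[OF i] snd_part])
qed



lemma meas_HH:
  assumes i: "i < n" and eta: "sets eta = sets (borel :: (real^'N) measure)"
  shows "HH n i \<in> ((XM n :: ((nat \<Rightarrow> nat) \<times> (nat \<Rightarrow> real^'N)) measure) \<Otimes>\<^sub>M eta) \<rightarrow>\<^sub>M borel_of (amb_top n)"
proof -
  let ?P = "(XM n :: ((nat \<Rightarrow> nat) \<times> (nat \<Rightarrow> real^'N)) measure) \<Otimes>\<^sub>M eta"
  have [measurable]: "(\<lambda>p. snd (fst p) j :: real^'N) \<in> ?P \<rightarrow>\<^sub>M borel" if "j \<in> {..<Suc n}" for j
    using measurable_compose[OF measurable_fst meas_XM_snd[of j n]] that by simp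
  have [measurable]: "(\<lambda>p. real (cardpsi n (fst (fst p)))) \<in> borel_measurable ?P"
    by (rule measurable_compose[OF measurable_fst meas_XM_card])
  have [measurable]: "(\<lambda>p. snd p) \<in> ?P \<rightarrow>\<^sub>M (borel :: (real^'N) measure)"
    by (rule measurable_compose[OF measurable_snd measurable_ident_sets[OF eta]])
  have in1: "i \<in> {..<Suc n}" "n \<in> {..<Suc n}" using i by auto
  have fst_part: "(\<lambda>p. flip i (fst (fst p))) \<in> ?P \<rightarrow>\<^sub>M borel_of (P1 n)"
    using measurable_compose[OF measurable_fst meas_XM_flip[OF i]] by simp
  have snd_part: "(\<lambda>p. (snd (fst p))(i := snd p + snd (fst p) n,
       n := (1 / (real (cardpsi n (fst (fst p))) + 1)) *\<^sub>R snd p + snd (fst p) n)) \<in> ?P \<rightarrow>\<^sub>M borel_of (P2 n)"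
  proof (rule measurable_product_topology[OF second_countable_P2])
    fix k assume k: "k \<in> {..<Suc n}"
    show "(\<lambda>p. ((snd (fst p))(i := snd p + snd (fst p) n,
       n := (1 / (real (cardpsi n (fst (fst p))) + 1)) *\<^sub>R snd p + snd (fst p) n)) k) \<in> ?P \<rightarrow>\<^sub>M borel_of euclidean"
    proof (cases "k = n")
      case True
      show ?thesis unfolding True borel_of_euclidean using in1 by simp measurable
    next
      case False
      show ?thesis
      proof (cases "k = i")
        case True
        show ?thesis unfolding True borel_of_euclidean using in1 \<open>k \<noteq> n\<close> True by simp measurable
      next
        case False
        show ?thesis unfolding borel_of_euclidean using False \<open>k \<noteq> n\<close> k by simp
      qed
    qed
  next
    fix p assume "p \<in> space ?P"
    then have "fst p \<in> space (XM n :: ((nat \<Rightarrow> nat) \<times> (nat \<Rightarrow> real^'N)) measure)"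
      by (auto simp: space_pair_measure)
    then have "snd (fst p) \<in> (\<Pi>\<^sub>E i\<in>{..<Suc n}. UNIV)" by (rule snd_XM_PiE)
    then show "(snd (fst p))(i := snd p + snd (fst p) n,
       n := (1 / (real (cardpsi n (fst (fst p))) + 1)) *\<^sub>R snd p + snd (fst p) n) \<in> extensional {..<Suc n}"
      using i by (auto simp: extensional_def PiE_def)
  qed
  show ?thesis unfolding HH_def amb_top_eq
    by (rule measurable_prod_topology[OF sc_amb' fst_part snd_part])
qed



lemma Xset_iff: "s \<in> Xset n \<longleftrightarrow> fst s \<in> (\<Pi>\<^sub>E i\<in>{..<n}. {0,1}) \<and> snd s \<in> (\<Pi>\<^sub>E i\<in>{..<Suc n}. UNIV)
   \<and> (\<Sum>i<n. real (fst s i) *\<^sub>R (snd s i - snd s n)) = 0"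
  unfolding Xset_alt topspace_amb by (simp add: mem_Times_iff)

lemma flip_PiE: "i < n \<Longrightarrow> \<psi> \<in> (\<Pi>\<^sub>E i\<in>{..<n}. {0,1}) \<Longrightarrow> flip i \<psi> \<in> (\<Pi>\<^sub>E i\<in>{..<n}. {0,1::nat})"
  by (auto simp: PiE_iff extensional_def flip_def)

lemma real_flip_1: "\<psi> i = 1 \<Longrightarrow> real (flip i \<psi> j) = real (\<psi> j) - (if j = i then 1 else 0)"
  by (simp add: flip_def)

lemma real_flip_0: "\<psi> i = 0 \<Longrightarrow> real (flip i \<psi> j) = real (\<psi> j) + (if j = i then 1 else 0)"
  by (simp add: flip_def)

lemma sum_delta_scaleR: "i \<in> A \<Longrightarrow> finite A \<Longrightarrow> (\<Sum>j\<in>A. (if j = i then (u::'a::real_vector) else 0)) = u"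
  by simp

lemma inX_G1:
  assumes s: "s \<in> Xset n" and i: "i < n" and psi: "fst s i = 1" and card: "cardpsi n (fst s) = 1"
  shows "(flip i (fst s), snd s) \<in> Xset n"
proof -
  have P: "fst s \<in> (\<Pi>\<^sub>E i\<in>{..<n}. {0,1})" "snd s \<in> (\<Pi>\<^sub>E i\<in>{..<Suc n}. UNIV)"
    using s by (simp_all add: Xset_iff)
  have "cardpsi n (fst s) = fst s i + (\<Sum>j\<in>{..<n}-{i}. fst s j)"
    unfolding cardpsi_def using i by (simp add: sum.remove[of "{..<n}" i])
  then have "(\<Sum>j\<in>{..<n}-{i}. fst s j) = 0" using psi card by simp
  then have z: "fst s j = 0" if "j < n" "j \<noteq> i" for j
    using that by (simp add: sum_eq_0_iff)
  have "flip i (fst s) j = 0" if "j < n" for j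
    using z[OF that] psi by (cases "j = i") (simp_all add: flip_def)
  then have "(\<Sum>j<n. real (flip i (fst s) j) *\<^sub>R (snd s j - snd s n)) = 0" by simp
  then show ?thesis using flip_PiE[OF i P(1)] P(2) by (simp add: Xset_iff)
qed

lemma inX_G2:
  assumes s: "s \<in> Xset n" and i: "i < n" and psi: "fst s i = 1" and card: "cardpsi n (fst s) \<noteq> 1"
  shows "G2 n i s \<in> Xset n"
proof -
  define \<psi> where "\<psi> = fst s"
  define v where "v = snd s"
  define k where "k = real (cardpsi n \<psi>)"
  define c where "c = 1 / (k - 1)"
  define u where "u = v i - v n"
  define w where "w = v(n := v n - c *\<^sub>R u)"
  have P: "\<psi> \<in> (\<Pi>\<^sub>E i\<in>{..<n}. {0,1})" "v \<in> (\<Pi>\<^sub>E i\<in>{..<Suc n}. UNIV)"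
     and S: "(\<Sum>j<n. real (\<psi> j) *\<^sub>R (v j - v n)) = 0"
    using s by (simp_all add: Xset_iff \<psi>_def v_def)
  have "1 \<le> cardpsi n \<psi>"
    unfolding cardpsi_def using psi i \<psi>_def by (metis finite_lessThan lessThan_iff member_le_sum zero_le)
  then have "k - 1 \<noteq> 0" using card \<psi>_def k_def by simp
  then have kc: "(k - 1) * c = 1" by (simp add: c_def)
  have pt: "real (flip i \<psi> j) *\<^sub>R (w j - w n) =
     real (\<psi> j) *\<^sub>R (v j - v n) + (real (\<psi> j) * c) *\<^sub>R u - (if j = i then u + c *\<^sub>R u else 0)"
    if "j < n" for j
  proof (cases "j = i")
    case True
    then show ?thesis using that psi by (simp add: \<psi>_def w_def u_def flip_def)
  next
    case False
    then show ?thesis using that by (simp add: w_def flip_def algebra_simps)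
  qed
  have "(\<Sum>j<n. real (flip i \<psi> j) *\<^sub>R (w j - w n)) =
      (\<Sum>j<n. real (\<psi> j) *\<^sub>R (v j - v n)) + (\<Sum>j<n. real (\<psi> j) * c) *\<^sub>R u - (\<Sum>j<n. (if j = i then u + c *\<^sub>R u else 0))"
    by (simp add: pt sum.distrib sum_subtractf scaleR_sum_left)
  also have "\<dots> = (k * c) *\<^sub>R u - (u + c *\<^sub>R u)"
    using S i by (simp add: k_def cardpsi_def of_nat_sum sum_distrib_right)
  also have "\<dots> = ((k - 1) * c - 1) *\<^sub>R u" by (simp add: algebra_simps)
  also have "\<dots> = 0" using kc by simp
  finally have E: "(\<Sum>j<n. real (flip i \<psi> j) *\<^sub>R (w j - w n)) = 0" .
  have W: "w \<in> (\<Pi>\<^sub>E i\<in>{..<Suc n}. UNIV)" using P(2) by (auto simp: w_def PiE_def extensional_def)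
  have "G2 n i s = (flip i \<psi>, w)"
    by (simp add: G2_def \<psi>_def v_def w_def c_def u_def k_def)
  then show ?thesis using flip_PiE[OF i P(1)] W E by (simp add: Xset_iff)
qed

lemma inX_H:
  assumes s: "s \<in> Xset n" and i: "i < n" and psi: "fst s i \<noteq> 1"
  shows "HH n i (s, x) \<in> Xset n"
proof -
  define \<psi> where "\<psi> = fst s"
  define v where "v = snd s"
  define k where "k = real (cardpsi n \<psi>)"
  define d where "d = 1 / (k + 1)"
  define w where "w = v(i := x + v n, n := d *\<^sub>R x + v n)"
  have P: "\<psi> \<in> (\<Pi>\<^sub>E i\<in>{..<n}. {0,1})" "v \<in> (\<Pi>\<^sub>E i\<in>{..<Suc n}. UNIV)"
     and S: "(\<Sum>j<n. real (\<psi> j) *\<^sub>R (v j - v n)) = 0"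
    using s by (simp_all add: Xset_iff \<psi>_def v_def)
  have psi0: "\<psi> i = 0" using P(1) i psi \<psi>_def by (auto simp: PiE_iff)
  have "k + 1 \<noteq> 0" unfolding k_def by simp
  then have kd: "(k + 1) * d = 1" by (simp add: d_def)
  have pt: "real (flip i \<psi> j) *\<^sub>R (w j - w n) =
     real (\<psi> j) *\<^sub>R (v j - v n) - (real (\<psi> j) * d) *\<^sub>R x + (if j = i then x - d *\<^sub>R x else 0)"
    if "j < n" for j
  proof (cases "j = i")
    case True
    then show ?thesis using that psi0 by (simp add: w_def flip_def)
  next
    case False
    then show ?thesis using that by (simp add: w_def flip_def algebra_simps)
  qed
  have "(\<Sum>j<n. real (flip i \<psi> j) *\<^sub>R (w j - w n)) =
      (\<Sum>j<n. real (\<psi> j) *\<^sub>R (v j - v n)) - (\<Sum>j<n. real (\<psi> j) * d) *\<^sub>R x + (\<Sum>j<n. (if j = i then x - d *\<^sub>R x else 0))"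
    by (simp add: pt sum.distrib sum_subtractf scaleR_sum_left)
  also have "\<dots> = x - d *\<^sub>R x - (k * d) *\<^sub>R x"
    using S i by (simp add: k_def cardpsi_def of_nat_sum sum_distrib_right)
  also have "\<dots> = (1 - (k + 1) * d) *\<^sub>R x" by (simp add: algebra_simps)
  also have "\<dots> = 0" using kd by simp
  finally have E: "(\<Sum>j<n. real (flip i \<psi> j) *\<^sub>R (w j - w n)) = 0" .
  have W: "w \<in> (\<Pi>\<^sub>E i\<in>{..<Suc n}. UNIV)" using P(2) i by (auto simp: w_def PiE_def extensional_def)
  have "HH n i (s, x) = (flip i \<psi>, w)"
    by (simp add: HH_def \<psi>_def v_def w_def d_def k_def)
  then show ?thesis using flip_PiE[OF i P(1)] W E by (simp add: Xset_iff)
qed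



lemma card_le: "\<psi> \<in> (\<Pi>\<^sub>E i\<in>{..<n}. {0,1::nat}) \<Longrightarrow> cardpsi n \<psi> \<le> n"
proof -
  assume P: "\<psi> \<in> (\<Pi>\<^sub>E i\<in>{..<n}. {0,1::nat})"
  have le1: "\<psi> i \<le> 1" if "i \<in> {..<n}" for i
  proof -
    have "\<psi> i \<in> {0,1}" using PiE_mem[OF P that] .
    then show ?thesis by auto
  qed
  have "cardpsi n \<psi> \<le> (\<Sum>i<n. 1)" unfolding cardpsi_def
    by (rule sum_mono) (rule le1)
  then show ?thesis by simp
qed

lemma rate_props:
  assumes ta: "ta > 0" and td: "td > 0" and n: "n > 0" and P: "\<psi> \<in> (\<Pi>\<^sub>E i\<in>{..<n}. {0,1::nat})"
  shows "\<And>i. i < n \<Longrightarrow> rate ta td n \<psi> i \<ge> 0" and "(\<Sum>i<n. rate ta td n \<psi> i) = 1"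
proof -
  define k where "k = real (cardpsi n \<psi>)"
  have kn: "k \<le> real n" using card_le[OF P] by (simp add: k_def)
  have k0: "0 \<le> k" by (simp add: k_def)
  have D: "td * k + ta * (real n - k) > 0"
  proof (cases "k = 0")
    case True
    then show ?thesis using ta n by simp
  next
    case False
    then have "td * k > 0" using k0 td by simp
    moreover have "ta * (real n - k) \<ge> 0" using ta kn by simp
    ultimately show ?thesis by linarith
  qed
  have num: "td * real (\<psi> i) + ta * (1 - real (\<psi> i)) \<ge> 0" if "i < n" for i
  proof -
    have "\<psi> i \<in> {0,1}" using P that by (auto simp: PiE_iff)
    then show ?thesis using ta td by auto
  qed
  show "\<And>i. i < n \<Longrightarrow> rate ta td n \<psi> i \<ge> 0"
    unfolding rate_def using num D by (simp add: k_def)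
  have "(\<Sum>i<n. td * real (\<psi> i) + ta * (1 - real (\<psi> i))) = td * k + ta * (real n - k)"
    by (simp add: k_def cardpsi_def of_nat_sum sum.distrib sum_distrib_left sum_subtractf algebra_simps)
  then show "(\<Sum>i<n. rate ta td n \<psi> i) = 1"
    unfolding rate_def using D by (simp add: k_def flip: sum_divide_distrib)
qed

lemma lam_props:
  assumes s: "s \<in> Xset n" and i: "i < n" and eta: "prob_space eta" "sets eta = sets (borel :: (real^'N) measure)"
  shows "prob_space (lam n eta i s) \<and> sets (lam n eta i s) = sets (borel_of (amb_top n))
       \<and> emeasure (lam n eta i s) (Xset n) = 1"
proof -
  let ?A = "borel_of (amb_top n) :: ((nat \<Rightarrow> nat) \<times> (nat \<Rightarrow> real^'N)) measure"
  have sXM: "s \<in> space (XM n :: ((nat \<Rightarrow> nat) \<times> (nat \<Rightarrow> real^'N)) measure)" using s by (simp add: space_XM)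
  have XA: "Xset n \<in> sets ?A" by (rule Xset_in_sets)
  have spA: "x \<in> space ?A" if "x \<in> Xset n" for x using that Xset_sub by auto
  show ?thesis
  proof (cases "fst s i = 1")
    case True
    show ?thesis
    proof (cases "cardpsi n (fst s) = 1")
      case True2: True
      have X: "(flip i (fst s), snd s) \<in> Xset n" by (rule inX_G1[OF s i True True2])
      show ?thesis using True True2 X XA spA[OF X] by (simp add: lam_eq prob_space_return)
    next
      case False
      have X: "G2 n i s \<in> Xset n" by (rule inX_G2[OF s i True False])
      show ?thesis using True False X XA spA[OF X] by (simp add: lam_eq prob_space_return)
    qed
  next
    case False
    have h: "(\<lambda>x. HH n i (s, x)) \<in> eta \<rightarrow>\<^sub>M ?A"
      by (rule measurable_Pair2[OF meas_HH[OF i eta(2)] sXM])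
    have pre: "(\<lambda>x. HH n i (s, x)) -` Xset n \<inter> space eta = space eta"
      using inX_H[OF s i False] by auto
    have "prob_space (distr eta ?A (\<lambda>x. HH n i (s, x)))"
      by (rule prob_space.prob_space_distr[OF eta(1) h])
    moreover have "emeasure (distr eta ?A (\<lambda>x. HH n i (s, x))) (Xset n) = 1"
      using emeasure_distr[OF h XA] pre prob_space.emeasure_space_1[OF eta(1)] by simp
    ultimately show ?thesis using False by (simp add: lam_eq)
  qed
qed

lemma measure_lam_eq:
  assumes s: "s \<in> space (XM n :: ((nat \<Rightarrow> nat) \<times> (nat \<Rightarrow> real^'N)) measure)" and i: "i < n"
    and eta: "sets eta = sets (borel :: (real^'N) measure)"
    and B: "B \<in> sets (borel_of (amb_top n) :: ((nat \<Rightarrow> nat) \<times> (nat \<Rightarrow> real^'N)) measure)"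
  shows "measure (lam n eta i s) B =
    (if fst s i = 1 then (if cardpsi n (fst s) = 1 then indicator B (flip i (fst s), snd s) else indicator B (G2 n i s))
     else enn2real (emeasure eta (Pair s -` (HH n i -` B \<inter> space ((XM n :: ((nat \<Rightarrow> nat) \<times> (nat \<Rightarrow> real^'N)) measure) \<Otimes>\<^sub>M eta)))))"
proof -
  have h: "(\<lambda>x. HH n i (s, x)) \<in> eta \<rightarrow>\<^sub>M borel_of (amb_top n)"
    by (rule measurable_Pair2[OF meas_HH[OF i eta] s])
  have pre: "Pair s -` (HH n i -` B \<inter> space ((XM n :: ((nat \<Rightarrow> nat) \<times> (nat \<Rightarrow> real^'N)) measure) \<Otimes>\<^sub>M eta))
      = (\<lambda>x. HH n i (s, x)) -` B \<inter> space eta"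
    using s by (auto simp: space_pair_measure)
  show ?thesis
  proof (cases "fst s i = 1")
    case True
    then show ?thesis using B by (simp add: lam_eq measure_return)
  next
    case False
    then have "measure (lam n eta i s) B = measure eta ((\<lambda>x. HH n i (s, x)) -` B \<inter> space eta)"
      using measure_distr[OF h B] by (simp add: lam_eq)
    then show ?thesis using False pre by (simp add: measure_def)
  qed
qed



theorem proposition1:
  fixes ta td :: real and n :: nat and eta :: "(real^'N) measure"
  assumes "ta > 0" and "td > 0" and "n > 0"
    and "prob_space eta" and "sets eta = sets (borel :: (real^'N) measure)"
    and "integrable eta (\<lambda>x. norm x)"
  shows "(\<forall>B \<in> sets (XM n :: ((nat \<Rightarrow> nat) \<times> (nat \<Rightarrow> real^'N)) measure).
            (\<lambda>s. mu ta td n eta s B) \<in> borel_measurable (XM n))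
       \<and> (\<forall>s \<in> space (XM n :: ((nat \<Rightarrow> nat) \<times> (nat \<Rightarrow> real^'N)) measure).
            \<exists>M. prob_space M \<and> sets M = sets (XM n) \<and>
                (\<forall>B \<in> sets (XM n). measure M B = mu ta td n eta s B))"
proof (intro conjI ballI)
  let ?X = "XM n :: ((nat \<Rightarrow> nat) \<times> (nat \<Rightarrow> real^'N)) measure"
  have ta: "ta > 0" and td: "td > 0" and n: "n > 0" and eta: "prob_space eta"
    and etas: "sets eta = sets (borel :: (real^'N) measure)" using assms by auto
  have sf: "sigma_finite_measure eta" by (rule prob_space_imp_sigma_finite[OF eta])
  {
    fix B assume B: "B \<in> sets ?X"
    have Bamb: "B \<in> sets (borel_of (amb_top n) :: ((nat \<Rightarrow> nat) \<times> (nat \<Rightarrow> real^'N)) measure)"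
      by (rule sets_XM_sub[OF B])
    have mi: "(\<lambda>s. measure (lam n eta i s) B) \<in> borel_measurable ?X" if i: "i < n" for i
    proof -
      let ?Q = "HH n i -` B \<inter> space (?X \<Otimes>\<^sub>M eta)"
      have Q: "?Q \<in> sets (?X \<Otimes>\<^sub>M eta)" by (rule measurable_sets[OF meas_HH[OF i etas] Bamb])
      have e: "(\<lambda>s. enn2real (emeasure eta (Pair s -` ?Q))) \<in> borel_measurable ?X"
        by (rule borel_measurable_enn2real[OF sigma_finite_measure.measurable_emeasure_Pair[OF sf Q]])
      have "{s \<in> space ?X. fst s i = 1} = (\<lambda>s. real (fst s i)) -` {1} \<inter> space ?X" by auto
      also have "\<dots> \<in> sets ?X" by (rule measurable_sets[OF meas_XM_fst[OF i]]) simp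
      finally have c1: "{s \<in> space ?X. fst s i = 1} \<in> sets ?X" .
      have "{s \<in> space ?X. cardpsi n (fst s) = 1} = (\<lambda>s. real (cardpsi n (fst s))) -` {1} \<inter> space ?X" by auto
      also have "\<dots> \<in> sets ?X" by (rule measurable_sets[OF meas_XM_card]) simp
      finally have c2: "{s \<in> space ?X. cardpsi n (fst s) = 1} \<in> sets ?X" .
      have g1: "(\<lambda>s. indicator B (flip i (fst s), snd s) :: real) \<in> borel_measurable ?X"
        by (rule measurable_compose[OF meas_G1[OF i] borel_measurable_indicator[OF Bamb]])
      have g2: "(\<lambda>s. indicator B (G2 n i s) :: real) \<in> borel_measurable ?X"
        by (rule measurable_compose[OF meas_G2[OF i] borel_measurable_indicator[OF Bamb]])
      have "(\<lambda>s. if fst s i = 1 then (if cardpsi n (fst s) = 1 then indicator B (flip i (fst s), snd s) else indicator B (G2 n i s))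
               else enn2real (emeasure eta (Pair s -` ?Q))) \<in> borel_measurable ?X"
        by (rule measurable_If[OF measurable_If[OF g1 g2 c2] e c1])
      then show ?thesis
        by (subst measurable_cong[OF measure_lam_eq[OF _ i etas Bamb]])
    qed
    have [measurable]: "(\<lambda>s. measure (lam n eta i s) B) \<in> borel_measurable ?X" if "i \<in> {..<n}" for i
      using mi that by simp
    have [measurable]: "(\<lambda>s. real (fst s i)) \<in> borel_measurable ?X" if "i \<in> {..<n}" for i
      using meas_XM_fst[of i n] that by simp
    have [measurable]: "(\<lambda>s. real (cardpsi n (fst s))) \<in> borel_measurable ?X" by (rule meas_XM_card)
    show "(\<lambda>s. mu ta td n eta s B) \<in> borel_measurable ?X"
      unfolding mu_def rate_def by measurable
  }
  fix s assume s0: "s \<in> space ?X"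
  then have s: "s \<in> Xset n" by (simp add: space_XM)
  have P: "fst s \<in> (\<Pi>\<^sub>E i\<in>{..<n}. {0,1::nat})" by (rule fst_XM_PiE[OF s0])
  define r where "r i = rate ta td n (fst s) i" for i
  have r0: "r i \<ge> 0" if "i < n" for i using rate_props(1)[OF ta td n P that] by (simp add: r_def)
  have r1: "(\<Sum>i<n. r i) = 1" using rate_props(2)[OF ta td n P] by (simp add: r_def)
  define \<mu> where "\<mu> B = (\<Sum>i<n. ennreal (r i) * emeasure (lam n eta i s) B)" for B
  define M where "M = measure_of (Xset n) (sets ?X) \<mu>"
  have lp: "prob_space (lam n eta i s) \<and> sets (lam n eta i s) = sets (borel_of (amb_top n))
       \<and> emeasure (lam n eta i s) (Xset n) = 1" if "i < n" for i
    by (rule lam_props[OF s that eta etas])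
  have SA: "sigma_algebra (Xset n) (sets ?X)"
    using sets.sigma_algebra_axioms[of ?X] by (simp add: space_XM)
  have pos: "positive (sets ?X) \<mu>" by (simp add: positive_def \<mu>_def)
  have ca: "countably_additive (sets ?X) \<mu>"
    unfolding countably_additive_def
  proof (intro allI impI)
    fix A :: "nat \<Rightarrow> _" assume A: "range A \<subseteq> sets ?X" "disjoint_family A" "\<Union> (range A) \<in> sets ?X"
    have Ai: "range A \<subseteq> sets (lam n eta i s)" if "i < n" for i
      using A(1) lp[OF that] sets_XM_sub by blast
    have "(\<Sum>k. \<mu> (A k)) = (\<Sum>i<n. \<Sum>k. ennreal (r i) * emeasure (lam n eta i s) (A k))"
      unfolding \<mu>_def by (rule suminf_sum) (rule summableI)
    also have "\<dots> = (\<Sum>i<n. ennreal (r i) * emeasure (lam n eta i s) (\<Union> (range A)))"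
    proof (rule sum.cong[OF refl])
      fix i assume "i \<in> {..<n}"
      then show "(\<Sum>k. ennreal (r i) * emeasure (lam n eta i s) (A k)) = ennreal (r i) * emeasure (lam n eta i s) (\<Union> (range A))"
        using suminf_emeasure[OF Ai A(2)] by (simp add: ennreal_suminf_cmult)
    qed
    finally show "(\<Sum>k. \<mu> (A k)) = \<mu> (\<Union> (range A))" by (simp add: \<mu>_def)
  qed
  have eM: "emeasure M B = \<mu> B" if "B \<in> sets ?X" for B
    unfolding M_def by (rule emeasure_measure_of_sigma[OF SA pos ca that])
  have setsM: "sets M = sets ?X"
    unfolding M_def using sets.space_closed[of ?X] sigma_algebra.sigma_sets_eq[OF SA]
    by (simp add: space_XM)
  have spaceM: "space M = Xset n"
    unfolding M_def using sets.space_closed[of ?X] by (simp add: space_XM)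
  have XX: "Xset n \<in> sets ?X" using sets.top[of ?X] by (simp add: space_XM)
  have "emeasure M (space M) = \<mu> (Xset n)" using eM[OF XX] spaceM by simp
  also have "\<dots> = (\<Sum>i<n. ennreal (r i))" unfolding \<mu>_def using lp by simp
  also have "\<dots> = 1" using r0 r1 by (subst sum_ennreal) auto
  finally have probM: "prob_space M" by (rule prob_spaceI)
  show "\<exists>M. prob_space M \<and> sets M = sets ?X \<and> (\<forall>B \<in> sets ?X. measure M B = mu ta td n eta s B)"
  proof (intro exI[of _ M] conjI ballI probM setsM)
    fix B assume B: "B \<in> sets ?X"
    have Bl: "B \<in> sets (lam n eta i s)" if "i < n" for i using lp[OF that] sets_XM_sub[OF B] by simp
    have m0: "measure (lam n eta i s) B \<ge> 0" for i by simp
    have "\<mu> B = (\<Sum>i<n. ennreal (r i * measure (lam n eta i s) B))"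
      unfolding \<mu>_def
    proof (rule sum.cong[OF refl])
      fix i assume "i \<in> {..<n}"
      then have i: "i < n" by simp
      have "emeasure (lam n eta i s) B = ennreal (measure (lam n eta i s) B)"
        using lp[OF i] by (simp add: finite_measure.emeasure_eq_measure prob_space_def)
      then show "ennreal (r i) * emeasure (lam n eta i s) B = ennreal (r i * measure (lam n eta i s) B)"
        using r0[OF i] by (simp add: ennreal_mult)
    qed
    also have "\<dots> = ennreal (\<Sum>i<n. r i * measure (lam n eta i s) B)"
      using r0 by (subst sum_ennreal) auto
    finally have muB: "\<mu> B = ennreal (\<Sum>i<n. r i * measure (lam n eta i s) B)" .
    have nn: "0 \<le> (\<Sum>i<n. r i * measure (lam n eta i s) B)"
      by (rule sum_nonneg) (simp add: r0)
    have "measure M B = enn2real (\<mu> B)" unfolding measure_def eM[OF B] ..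
    also have "\<dots> = (\<Sum>i<n. r i * measure (lam n eta i s) B)"
      unfolding muB by (rule enn2real_ennreal[OF nn])
    finally have "measure M B = (\<Sum>i<n. r i * measure (lam n eta i s) B)" .
    then show "measure M B = mu ta td n eta s B" by (simp add: mu_def r_def)
  qed
qed

end
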